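(* Let $G$ be a one-point union of cycles of order $p$, i.e. a graph obtained from a collection of cycles by identifying one vertex from each cycle into a single common vertex. Then $str(G)=p+2$.
   Context: For a graph $G$ of order $p$, a numbering of $G$ is a bijection $f:V(G)\to[1,p]$. The strength of a numbering $f$ is $str_f(G)=\max\{f(u)+f(v): uv\in E(G)\}$, and the strength of a graph $G$ with at least one edge is $str(G)=\min\{str_f(G): f \text{ a numbering of } G\}$. *)

theory Defs
  imports Main
begin

text \<open>Simple graphs: a finite vertex set V and an edge set E of 2-element subsets of V.\<close>

definition numbering :: "'a set \<Rightarrow> ('a \<Rightarrow> nat) \<Rightarrow> bool" where
  "numbering V f \<longleftrightarrow> bij_betw f V {1..card V}"

definition strength_of :: "'a set set \<Rightarrow> ('a \<Rightarrow> nat) \<Rightarrow> nat" where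
  "strength_of E f = Max {f u + f v | u v. {u, v} \<in> E}"

definition strength :: "'a set \<Rightarrow> 'a set set \<Rightarrow> nat" where
  "strength V E = Min {strength_of E f | f. numbering V f}"

definition cycle_edges :: "'a list \<Rightarrow> 'a set set" where
  "cycle_edges xs = {{xs ! i, xs ! ((i + 1) mod length xs)} | i. i < length xs}"

definition one_point_union_of_cycles :: "'a set \<Rightarrow> 'a set set \<Rightarrow> bool" where
  "one_point_union_of_cycles V E \<longleftrightarrow>
    (\<exists>c C. finite C \<and> C \<noteq> {} \<and>
       (\<forall>xs\<in>C. distinct xs \<and> length xs \<ge> 3 \<and> hd xs = c) \<and>
       (\<forall>xs\<in>C. \<forall>ys\<in>C. xs \<noteq> ys \<longrightarrow> set xs \<inter> set ys = {c}) \<and>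
       V = (\<Union>xs\<in>C. set xs) \<and>
       E = (\<Union>xs\<in>C. cycle_edges xs))"

end

theory Submission
  imports Defs
begin

lemma nbr_idx:
  fixes i n :: nat
  assumes "i < n" "3 \<le> n"
  shows "(i+1) mod n \<noteq> (i+n-1) mod n \<and> (i+1) mod n \<noteq> i \<and> (i+n-1) mod n \<noteq> i
         \<and> ((i+n-1) mod n + 1) mod n = i \<and> (i+n-1) mod n < n \<and> (i+1) mod n < n"
proof -
  consider "i = 0" | "i = n - 1" | "0 < i \<and> i < n - 1" using assms by linarith
  then show ?thesis
  proof cases
    case 1
    then show ?thesis using assms by simp
  next
    case 2
    have a: "(i+1) mod n = 0" using 2 assms by simp
    have b: "(i+n-1) mod n = n - 2"
    proof -
      have e: "i + n - 1 = (n-2) + n" using 2 assms by simp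
      have "((n-2) + n) mod n = (n-2) mod n" by (rule mod_add_self2)
      then show ?thesis using e assms by simp
    qed
    have "n - 2 + 1 = n - 1" "n - 2 \<noteq> n - 1" using assms by auto
    then show ?thesis unfolding a b using 2 assms by simp
  next
    case 3
    have a: "(i+1) mod n = i+1" using 3 by (intro mod_less) linarith
    have b: "(i+n-1) mod n = i - 1"
    proof -
      have e: "i + n - 1 = (i-1) + n" using 3 by simp
      have "((i-1) + n) mod n = (i-1) mod n" by (rule mod_add_self2)
      then show ?thesis using e 3 assms by simp
    qed
    have "i - 1 + 1 = i" "i+1 \<noteq> i - 1" "i - 1 \<noteq> i" "i - 1 < n" "i + 1 < n" using 3 assms by auto
    then show ?thesis unfolding a b using 3 assms by simp
  qed
qed

lemma mod_lt: "i < (n::nat) \<Longrightarrow> x mod n < n"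
  using mod_less_divisor[of n x] by linarith

lemma edge_cases:
  assumes "{u,v} \<in> cycle_edges xs"
  shows "\<exists>i<length xs. (u = xs!i \<and> v = xs!((i+1) mod length xs)) \<or>
                        (v = xs!i \<and> u = xs!((i+1) mod length xs))"
  using assms unfolding cycle_edges_def by (auto simp: doubleton_eq_iff)

lemma evod: "\<exists>a::nat. j = 2*a \<and> even j \<or> j = 2*a+1 \<and> odd j"
  by (metis oddE evenE)

lemma g_inj:
  fixes p j k :: nat
  assumes "j < p - 1" "k < p - 1"
    "(if even j then p - j div 2 else j div 2 + 2) = (if even k then p - k div 2 else k div 2 + 2)"
  shows "j = k"
proof -
  obtain a where a: "j = 2*a \<and> even j \<or> j = 2*a+1 \<and> odd j" using evod by blast
  obtain b where b: "k = 2*b \<and> even k \<or> k = 2*b+1 \<and> odd k" using evod by blast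
  from a b assms show ?thesis by (elim disjE conjE) simp_all
qed

lemma g_range:
  fixes p j :: nat
  assumes "j < p - 1"
  shows "(if even j then p - j div 2 else j div 2 + 2) \<in> {2..p}"
proof -
  obtain a where a: "j = 2*a \<and> even j \<or> j = 2*a+1 \<and> odd j" using evod by blast
  from a assms show ?thesis by (elim disjE conjE) simp_all
qed

lemma g_adj:
  fixes p j :: nat
  assumes "j + 1 < p - 1"
  shows "(if even j then p - j div 2 else j div 2 + 2) + (if even (j+1) then p - (j+1) div 2 else (j+1) div 2 + 2) \<le> p + 2"
proof -
  obtain a where a: "j = 2*a \<and> even j \<or> j = 2*a+1 \<and> odd j" using evod by blast
  from a assms show ?thesis by (elim disjE conjE) simp_all
qed

lemma concat_split:
  assumes "xs \<in> set ls"
  shows "\<exists>A B. concat (map tl ls) = A @ tl xs @ B"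
proof -
  obtain l1 l2 where "ls = l1 @ xs # l2" using split_list[OF assms] by blast
  then show ?thesis by auto
qed

theorem mainTheorem4:
  fixes V :: "'a set" and E :: "'a set set"
  assumes "one_point_union_of_cycles V E"
  shows "strength V E = card V + 2"
proof -
  obtain c C where fin: "finite C" and ne: "C \<noteq> {}"
    and cyc: "\<forall>xs\<in>C. distinct xs \<and> length xs \<ge> 3 \<and> hd xs = c"
    and disj: "\<forall>xs\<in>C. \<forall>ys\<in>C. xs \<noteq> ys \<longrightarrow> set xs \<inter> set ys = {c}"
    and Vd: "V = (\<Union>xs\<in>C. set xs)" and Ed: "E = (\<Union>xs\<in>C. cycle_edges xs)"
    using assms unfolding one_point_union_of_cycles_def by blast
  define p where "p = card V"
  have finV: "finite V" using fin Vd by auto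
  have hd0: "xs ! 0 = c" if "xs \<in> C" for xs
    using cyc that by (metis hd_conv_nth list.size(3) not_numeral_le_zero)
  have setV: "set xs \<subseteq> V" if "xs \<in> C" for xs using Vd that by auto
  have cV: "c \<in> V"
  proof -
    obtain xs where "xs \<in> C" using ne by auto
    moreover have "xs \<noteq> []" using cyc calculation by auto
    ultimately show ?thesis using setV cyc hd_in_set by fastforce
  qed
  have p1: "p \<ge> 1" using cV finV p_def by (metis One_nat_def Suc_leI card_gt_0_iff empty_iff)
  have Ein: "u \<in> V \<and> v \<in> V" if hE: "{u,v} \<in> E" for u v
  proof -
    obtain xs where xs: "xs \<in> C" "{u,v} \<in> cycle_edges xs" using hE unfolding Ed by blast
    then obtain i where i: "i < length xs" and uv: "(u = xs!i \<and> v = xs!((i+1) mod length xs)) \<or>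
                        (v = xs!i \<and> u = xs!((i+1) mod length xs))" using edge_cases[OF xs(2)] by blast
    have "(i+1) mod length xs < length xs" using i by (rule mod_lt)
    then have "xs!i \<in> V" "xs!((i+1) mod length xs) \<in> V"
      using setV[OF xs(1)] i nth_mem by blast+
    with uv show ?thesis by blast
  qed
  have edgeI: "{xs!i, xs!((i+1) mod length xs)} \<in> E" if "xs \<in> C" "i < length xs" for xs i
    using that Ed unfolding cycle_edges_def by blast
  have frange: "f x \<in> {1..p}" if "numbering V f" "x \<in> V" for f x
    using that unfolding numbering_def p_def by (metis bij_betw_apply)
  have Tsub: "{f u + f v |u v. {u, v} \<in> E} \<subseteq> {..2*p}" if "numbering V f" for f
  proof
    fix s assume "s \<in> {f u + f v |u v. {u, v} \<in> E}"
    then obtain u v where "s = f u + f v" "{u,v} \<in> E" by blast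
    then have "u \<in> V" "v \<in> V" using Ein by blast+
    then have "f u \<le> p" "f v \<le> p" using frange[OF that] by auto
    then show "s \<in> {..2*p}" using \<open>s = f u + f v\<close> by simp
  qed
  have Ene: "E \<noteq> {}"
  proof -
    obtain xs where "xs \<in> C" using ne by auto
    moreover have "0 < length xs" using cyc calculation by fastforce
    ultimately show ?thesis using edgeI by blast
  qed
  have Tne: "{f u + f v |u v. {u, v} \<in> E} \<noteq> {}" for f :: "'a \<Rightarrow> nat"
  proof -
    obtain e where "e \<in> E" using Ene by auto
    then obtain xs i where "xs \<in> C" "i < length xs" "e = {xs!i, xs!((i+1) mod length xs)}"
      using Ed unfolding cycle_edges_def by blast
    then show ?thesis using \<open>e \<in> E\<close> by blast
  qed
  have Tfin: "finite {f u + f v |u v. {u, v} \<in> E}" if "numbering V f" for f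
    using Tsub[OF that] finite_subset by blast
  have Sle: "strength_of E f \<le> 2*p" if "numbering V f" for f
    unfolding strength_of_def using Tsub[OF that] Tfin[OF that] Tne by (simp add: subset_eq)
  have lower: "p + 2 \<le> strength_of E f" if num: "numbering V f" for f
  proof -
    have bij: "bij_betw f V {1..p}" using num unfolding numbering_def p_def .
    then have "p \<in> f ` V" using p1 by (simp add: bij_betw_def)
    then obtain w where w: "w \<in> V" "f w = p" by auto
    then obtain xs where xs: "xs \<in> C" "w \<in> set xs" using Vd by auto
    then obtain i where i: "i < length xs" "xs ! i = w" by (metis in_set_conv_nth)
    define n where "n = length xs"
    have n3: "3 \<le> n" using cyc xs n_def by auto
    have dxs: "distinct xs" using cyc xs by auto
    define a where "a = (i+1) mod n"
    define b where "b = (i+n-1) mod n"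
    have idx: "a \<noteq> b" "a \<noteq> i" "b \<noteq> i" "(b+1) mod n = i" "a < n" "b < n"
      using nbr_idx[OF i(1)[folded n_def] n3] a_def b_def by auto
    have ne1: "xs!a \<noteq> xs!b" "xs!a \<noteq> w" "xs!b \<noteq> w"
      using idx dxs i n_def by (auto simp: nth_eq_iff_index_eq)
    have inV: "xs!a \<in> V" "xs!b \<in> V" using idx setV[OF xs(1)] n_def by (auto intro: nth_mem)
    have inj: "inj_on f V" using bij by (simp add: bij_betw_def)
    have "f (xs!a) \<noteq> f (xs!b)" "f (xs!a) \<noteq> p" "f (xs!b) \<noteq> p"
      using ne1 inV w inj by (auto simp: inj_on_eq_iff)
    moreover have "f (xs!a) \<in> {1..p}" "f (xs!b) \<in> {1..p}" using inV frange num by auto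
    ultimately have two: "2 \<le> f (xs!a) \<or> 2 \<le> f (xs!b)" by auto
    have e1: "{w, xs!a} \<in> E" using edgeI[OF xs(1) i(1)] i a_def n_def by simp
    have e2: "{xs!b, w} \<in> E" using edgeI[OF xs(1), of b] idx i n_def by simp
    have m1: "f w + f (xs!a) \<le> strength_of E f"
      unfolding strength_of_def using Tfin[OF num] e1 by (intro Max_ge) blast+
    have m2: "f (xs!b) + f w \<le> strength_of E f"
      unfolding strength_of_def using Tfin[OF num] e2 by (intro Max_ge) blast+
    show ?thesis using two m1 m2 w by auto
  qed
  obtain ls where ls: "set ls = C" "distinct ls" using finite_distinct_list[OF fin] by blast
  define L where "L = concat (map tl ls)"
  have settl: "set (tl xs) = set xs - {c}" if "xs \<in> C" for xs
  proof -
    have "xs \<noteq> []" using cyc that by auto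
    then have "xs = c # tl xs" using cyc that by (metis list.collapse)
    moreover have "distinct xs" using cyc that by auto
    ultimately show ?thesis by (metis Diff_insert_absorb distinct.simps(2) list.simps(15))
  qed
  have distL: "distinct L" unfolding L_def
  proof (rule distinct_concat)
    show "distinct (map tl ls)"
    proof -
      have "inj_on tl C"
      proof
        fix xs ys assume "xs \<in> C" "ys \<in> C" "tl xs = tl ys"
        moreover have "xs \<noteq> []" "ys \<noteq> []" using cyc calculation by auto
        ultimately show "xs = ys" using cyc by (metis list.collapse)
      qed
      then show ?thesis using ls by (simp add: distinct_map)
    qed
  next
    fix ys assume "ys \<in> set (map tl ls)"
    then show "distinct ys" using ls cyc by (auto simp: distinct_tl)
  next
    fix ys zs assume "ys \<in> set (map tl ls)" "zs \<in> set (map tl ls)" "ys \<noteq> zs"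
    then obtain xs1 xs2 where "xs1 \<in> C" "xs2 \<in> C" "ys = tl xs1" "zs = tl xs2" "xs1 \<noteq> xs2"
      using ls by auto
    then show "set ys \<inter> set zs = {}" using settl disj by blast
  qed
  have setL: "set L = V - {c}" unfolding L_def using ls settl Vd by auto
  have lenL: "length L = p - 1"
    using distinct_card[OF distL] setL cV finV p_def by simp
  define g where "g = (\<lambda>j::nat. if even j then p - j div 2 else j div 2 + 2)"
  define f where "f = (\<lambda>x. if x = c then 1 else g (SOME j. j < length L \<and> L!j = x))"
  have fL: "f (L!j) = g j" if "j < length L" for j
  proof -
    have "L!j \<noteq> c" using setL that nth_mem by fastforce
    moreover have "(SOME k. k < length L \<and> L!k = L!j) = j"
      using that distL by (intro some_equality) (auto simp: nth_eq_iff_index_eq)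
    ultimately show ?thesis unfolding f_def by simp
  qed
  have fc: "f c = 1" unfolding f_def by simp
  have numf: "numbering V f"
  proof -
    have sub: "f ` V \<subseteq> {1..p}"
    proof
      fix y assume "y \<in> f ` V"
      then obtain x where x: "x \<in> V" "y = f x" by auto
      show "y \<in> {1..p}"
      proof (cases "x = c")
        case True then show ?thesis using x fc p1 by simp
      next
        case False
        then have "x \<in> set L" using setL x by auto
        then obtain j where "j < length L" "x = L!j" by (metis in_set_conv_nth)
        then show ?thesis using x fL g_range[of j p] lenL g_def by auto
      qed
    qed
    have inj: "inj_on f V"
    proof
      fix x y assume xy: "x \<in> V" "y \<in> V" "f x = f y"
      show "x = y"
      proof (cases "x = c \<or> y = c")
        case True
        have ge2: "2 \<le> f z" if "z \<in> V" "z \<noteq> c" for z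
        proof -
          have "z \<in> set L" using setL that by auto
          then obtain j where "j < length L" "z = L!j" by (metis in_set_conv_nth)
          then show ?thesis using fL g_range[of j p] lenL g_def by auto
        qed
        show ?thesis using True xy ge2 fc by (metis numeral_le_one_iff semiring_norm(69))
      next
        case False
        then have "x \<in> set L" "y \<in> set L" using setL xy by auto
        then obtain j k where jk: "j < length L" "x = L!j" "k < length L" "y = L!k"
          by (metis in_set_conv_nth)
        then have "g j = g k" using fL xy by auto
        then have "j = k" using g_inj[of j p k] jk lenL unfolding g_def by auto
        then show ?thesis using jk by simp
      qed
    qed
    have "card (f ` V) = card {1..p}" using card_image[OF inj] p_def by simp
    then have "f ` V = {1..p}" using sub by (intro card_subset_eq) auto
    then show ?thesis unfolding numbering_def bij_betw_def p_def using inj p_def by simp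
  qed
  have fle: "f x \<le> p" if "x \<in> V" for x using frange[OF numf that] by simp
  have pair: "f (xs!i) + f (xs!((i+1) mod length xs)) \<le> p + 2" if xs: "xs \<in> C" "i < length xs" for xs i
  proof -
    define n where "n = length xs"
    have n3: "3 \<le> n" using cyc xs n_def by auto
    have inV: "xs!i \<in> V" "xs!((i+1) mod n) \<in> V"
      using setV[OF xs(1)] xs n_def nth_mem mod_lt[OF xs(2)] by blast+
    consider "i = 0" | "i = n - 1" | "0 < i \<and> i < n - 1" using xs n_def by linarith
    then show ?thesis
    proof cases
      case 1
      have "f (xs!((i+1) mod n)) \<le> p" using fle inV(2) .
      moreover have "f (xs!i) = 1" using 1 hd0[OF xs(1)] fc by simp
      ultimately show ?thesis using n_def by simp
    next
      case 2
      then have "(i+1) mod n = 0" using n3 by simp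
      then have "f (xs!((i+1) mod n)) = 1" using hd0[OF xs(1)] fc by simp
      moreover have "f (xs!i) \<le> p" using fle inV(1) .
      ultimately show ?thesis using n_def by simp
    next
      case 3
      have m: "(i+1) mod n = i+1" using 3 by (intro mod_less) linarith
      obtain A B where AB: "L = A @ tl xs @ B" using concat_split[of xs ls] ls xs L_def by auto
      have ltl: "length (tl xs) = n - 1" using n_def by simp
      have q: "L ! (length A + k) = xs ! (k+1)" if "k < n - 1" for k
      proof -
        have "L ! (length A + k) = (tl xs @ B) ! k" unfolding AB by (rule nth_append_length_plus)
        also have "\<dots> = tl xs ! k" using that ltl by (simp add: nth_append)
        also have "\<dots> = xs ! (k+1)" using that ltl by (simp add: nth_tl)
        finally show ?thesis .
      qed
      have il: "i - 1 < n - 1" using 3 by linarith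
      have q1: "L ! (length A + (i - 1)) = xs ! i" using q[OF il] 3 by simp
      have q2: "L ! (length A + i) = xs ! (i+1)" using q[of i] 3 by simp
      have lt: "length A + i < length L" using AB 3 ltl by simp
      have "f (xs!i) + f (xs!(i+1)) = g (length A + (i - 1)) + g (length A + (i-1) + 1)"
      proof -
        have j1: "length A + (i-1) < length L" using lt by linarith
        have e: "length A + (i-1) + 1 = length A + i" using 3 by linarith
        have "f (xs!i) = g (length A + (i-1))" using fL[OF j1] q1 by simp
        moreover have "f (xs!(i+1)) = g (length A + (i-1) + 1)" using fL[OF lt] q2 e by simp
        ultimately show ?thesis by simp
      qed
      also have "\<dots> \<le> p + 2" unfolding g_def using g_adj[of "length A + (i - 1)" p] lt lenL 3
        by simp
      finally show ?thesis using m n_def by simp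
    qed
  qed
  have upper: "strength_of E f \<le> p + 2"
    unfolding strength_of_def
  proof (rule Max.boundedI[OF Tfin[OF numf] Tne])
    fix s assume "s \<in> {f u + f v |u v. {u, v} \<in> E}"
    then obtain u v where uv: "s = f u + f v" "{u,v} \<in> E" by blast
    then obtain xs where xs: "xs \<in> C" "{u,v} \<in> cycle_edges xs" using Ed by auto
    then obtain i where "i < length xs" "(u = xs!i \<and> v = xs!((i+1) mod length xs)) \<or>
                        (v = xs!i \<and> u = xs!((i+1) mod length xs))" using edge_cases[OF xs(2)] by blast
    then have "s = f (xs!i) + f (xs!((i+1) mod length xs))" using uv by auto
    then show "s \<le> p + 2" using pair[OF xs(1) \<open>i < length xs\<close>] by simp
  qed
  define S where "S = {strength_of E f | f. numbering V f}"
  have finS: "finite S"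
  proof -
    have "S \<subseteq> {..2*p}" unfolding S_def using Sle by auto
    then show ?thesis using finite_subset by blast
  qed
  have inS: "strength_of E f \<in> S" unfolding S_def using numf by blast
  have "Min S = p + 2"
  proof (rule antisym)
    show "Min S \<le> p + 2" using Min_le[OF finS inS] upper by simp
    have "Min S \<in> S" using finS inS by (intro Min_in) auto
    then show "p + 2 \<le> Min S" unfolding S_def using lower by auto
  qed
  then show ?thesis unfolding strength_def S_def p_def by simp
qed

end
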